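(* Let $n,m,k,r$ be positive integers. Then \begin{align*} S_{\leq m}(n,k,r)={}&S_{\leq m}(n-1,k,r-1)+(k-1)S_{\leq m}(n-1,k-1,r)+(k+r-1)S_{\leq m}(n-1,k,r)\\ &-\binom{n-1}{m}S_{\leq m}(n-m-1,k,r-1)-(k-1)\binom{n-1}{m}S_{\leq m}(n-m-1,k-1,r), \end{align*} where terms containing the factor $\binom{n-1}{m}$ are $0$ when $n-1<m$, and terms containing the factor $k-1$ are $0$ when $k=1$.
   Context: For integers $N\ge 0$, $k\ge1$, $r\ge 0$, $m\ge1$, $S_{\leq m}(N,k,r)$ is the number of ways to partition $[N]=\{1,\dots,N\}$ into $r+k-1$ non-empty blocks, each of size at most $m$, where $r$ of the blocks receive the label $1$ (blocks with label $1$ are indistinguishable among themselves) and the remaining $k-1$ blocks receive the distinct labels $2,3,\dots,k$. *)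

theory Defs
  imports Main "HOL-Library.Disjoint_Sets"
begin

text \<open>A labelled partition of {1..N}: a set B of r blocks carrying label 1
  (unordered) together with a list bs of k-1 further blocks, where the i-th entry
  of bs is the block carrying label i+2. All blocks are nonempty, pairwise distinct,
  form a partition of {1..N}, and have size at most m.\<close>
definition labeled_partitions :: "nat \<Rightarrow> nat \<Rightarrow> nat \<Rightarrow> nat \<Rightarrow> (nat set set \<times> nat set list) set" where
  "labeled_partitions m N k r =
     {(B, bs). partition_on {1..N} (B \<union> set bs) \<and> card B = r \<and> finite B
             \<and> length bs = k - 1 \<and> distinct bs \<and> B \<inter> set bs = {}
             \<and> (\<forall>X \<in> B \<union> set bs. card X \<le> m)}"

definition S_le :: "nat \<Rightarrow> nat \<Rightarrow> nat \<Rightarrow> nat \<Rightarrow> nat" where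
  "S_le m N k r = card (labeled_partitions m N k r)"

end

theory Submission
  imports Defs
begin

definition LP :: "nat \<Rightarrow> nat set \<Rightarrow> nat \<Rightarrow> nat \<Rightarrow> (nat set set \<times> nat set list) set" where
  "LP m A L r = {(B, bs). partition_on A (B \<union> set bs) \<and> card B = r \<and> finite B
             \<and> length bs = L \<and> distinct bs \<and> B \<inter> set bs = {}
             \<and> (\<forall>X \<in> B \<union> set bs. card X \<le> m)}"

lemma S_le_LP: "S_le m N k r = card (LP m {1..N} (k-1) r)"
  by (simp add: S_le_def labeled_partitions_def LP_def)

lemma LP_I: "partition_on A (B \<union> set bs) \<Longrightarrow> card B = r \<Longrightarrow> finite B \<Longrightarrow> length bs = L
  \<Longrightarrow> distinct bs \<Longrightarrow> B \<inter> set bs = {} \<Longrightarrow> (\<forall>X \<in> B \<union> set bs. card X \<le> m) \<Longrightarrow> (B, bs) \<in> LP m A L r"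
  by (simp add: LP_def)

lemma LP_D: assumes "(B, bs) \<in> LP m A L r"
  shows "partition_on A (B \<union> set bs)" "card B = r" "finite B" "length bs = L"
  "distinct bs" "B \<inter> set bs = {}" "\<forall>X \<in> B \<union> set bs. card X \<le> m"
  using assms by (simp_all add: LP_def)

lemma LP_blocks: "(B, bs) \<in> LP m A L r \<Longrightarrow> Y \<in> B \<union> set bs \<Longrightarrow> Y \<subseteq> A \<and> Y \<noteq> {}"
  unfolding LP_def partition_on_def by auto

lemma finite_LP: assumes "finite A" shows "finite (LP m A L r)"
proof (rule finite_subset)
  show "LP m A L r \<subseteq> Pow (Pow A) \<times> {bs. set bs \<subseteq> Pow A \<and> length bs = L}"
  proof
    fix p assume p0: "p \<in> LP m A L r"
    obtain B bs where pe: "p = (B, bs)" by (cases p)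
    have p: "(B, bs) \<in> LP m A L r" using p0 pe by simp
    have "B \<subseteq> Pow A" "set bs \<subseteq> Pow A" using LP_blocks[OF p] by auto
    moreover have "length bs = L" using p by (simp add: LP_def)
    ultimately show "p \<in> Pow (Pow A) \<times> {bs. set bs \<subseteq> Pow A \<and> length bs = L}" using pe by simp
  qed
  show "finite (Pow (Pow A) \<times> {bs. set bs \<subseteq> Pow A \<and> length bs = L})"
    using assms by (intro finite_cartesian_product finite_lists_length_eq) auto
qed

lemma part_insert_iff: "X \<notin> Q \<Longrightarrow>
   partition_on A (insert X Q) \<longleftrightarrow> partition_on (A - X) Q \<and> X \<subseteq> A \<and> X \<noteq> {}"
proof -
  assume nX: "X \<notin> Q"
  show ?thesis
  proof (cases "disjnt X (\<Union>Q)")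
    case True
    then show ?thesis by (rule partition_on_insert)
  next
    case False
    then obtain Y where Y: "Y \<in> Q" "X \<inter> Y \<noteq> {}" by (auto simp: disjnt_def)
    have "\<not> partition_on A (insert X Q)"
    proof
      assume "partition_on A (insert X Q)"
      then have "disjoint (insert X Q)" by (rule partition_onD2)
      then have "disjnt X Y" using Y nX by (metis insertCI pairwiseD)
      then show False using Y by (simp add: disjnt_def)
    qed
    moreover have "\<not> partition_on (A - X) Q"
    proof
      assume "partition_on (A - X) Q"
      then have "Y \<subseteq> A - X" using Y partition_onD1 by blast
      then show False using Y by blast
    qed
    ultimately show ?thesis by blast
  qed
qed

lemma part_remove: "X \<in> Q \<Longrightarrow> partition_on A Q \<Longrightarrow> partition_on (A - X) (Q - {X})"
  using part_insert_iff[of X "Q - {X}" A] by (simp add: insert_absorb)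

lemma LP_map_in:
  assumes h: "inj_on h A" and p: "(B, bs) \<in> LP m A L r"
  shows "((`) h ` B, map ((`) h) bs) \<in> LP m (h ` A) L r"
proof -
  let ?H = "(`) h"
  have sub: "B \<union> set bs \<subseteq> Pow A" using LP_blocks[OF p] by auto
  have injH: "inj_on ?H (B \<union> set bs)"
    by (rule inj_on_subset[OF inj_on_image_Pow[OF h] sub])
  have P: "partition_on A (B \<union> set bs)" "card B = r" "finite B" "length bs = L" "distinct bs"
    "B \<inter> set bs = {}" "\<forall>X \<in> B \<union> set bs. card X \<le> m"
    using p by (auto simp: LP_def)
  have "partition_on (h ` A) (?H ` (B \<union> set bs) - {{}})"
    by (rule partition_on_inj_image[OF P(1) h])
  moreover have "?H ` (B \<union> set bs) - {{}} = ?H ` B \<union> set (map ?H bs)"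
    using LP_blocks[OF p] by auto
  ultimately have 1: "partition_on (h ` A) (?H ` B \<union> set (map ?H bs))" by simp
  have 2: "card (?H ` B) = r"
    using P(2) injH by (simp add: card_image inj_on_subset)
  have 3: "distinct (map ?H bs)"
    using P(5) injH by (simp add: distinct_map inj_on_subset)
  have 4: "?H ` B \<inter> set (map ?H bs) = {}"
    using P(6) injH inj_on_image_Int[OF injH, of B "set bs"] by auto
  have 5: "\<forall>X \<in> ?H ` B \<union> set (map ?H bs). card X \<le> m"
  proof
    fix X assume "X \<in> ?H ` B \<union> set (map ?H bs)"
    then obtain Y where Y: "Y \<in> B \<union> set bs" "X = h ` Y" by auto
    have "card X = card Y" using Y sub h by (simp add: card_image inj_on_subset subset_eq)
    then show "card X \<le> m" using P(7) Y by auto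
  qed
  show ?thesis using 1 2 3 4 5 P(3,4) by (simp add: LP_def)
qed

lemma LP_map_inj:
  assumes h: "inj_on h A"
  shows "inj_on (\<lambda>(B, bs). ((`) h ` B, map ((`) h) bs)) (LP m A L r)"
proof -
  have "B = C \<and> bs = cs" if p: "(B, bs) \<in> LP m A L r" and q: "(C, cs) \<in> LP m A L r"
    and e: "(`) h ` B = (`) h ` C" "map ((`) h) bs = map ((`) h) cs" for B bs C cs
  proof -
    have sub: "B \<union> set bs \<union> (C \<union> set cs) \<subseteq> Pow A" using LP_blocks[OF p] LP_blocks[OF q] by auto
    have injH: "inj_on ((`) h) (B \<union> set bs \<union> (C \<union> set cs))"
      by (rule inj_on_subset[OF inj_on_image_Pow[OF h] sub])
    have "B = C" using inj_on_image_eq_iff[OF injH, of B C] e(1) by auto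
    moreover have "bs = cs" using e(2) inj_on_map_eq_map[of "(`) h" bs cs] injH inj_on_subset by blast
    ultimately show ?thesis by simp
  qed
  then show ?thesis by (auto simp: inj_on_def)
qed

lemma LP_card_le:
  assumes "finite A" "finite A'" "card A = card A'"
  shows "card (LP m A L r) \<le> card (LP m A' L r)"
proof -
  obtain h where h: "bij_betw h A A'" using assms finite_same_card_bij by blast
  have "inj_on h A" "h ` A = A'" using h by (auto simp: bij_betw_def)
  then show ?thesis
    using card_inj_on_le[OF LP_map_inj[of h A m L r] _ finite_LP[OF assms(2)]] LP_map_in[of h A]
    by fastforce
qed

lemma LP_card_eq:
  assumes "finite A" "finite A'" "card A = card A'"
  shows "card (LP m A L r) = card (LP m A' L r)"
  using LP_card_le[OF assms, of m L r] LP_card_le[OF assms(2,1) assms(3)[symmetric], of m L r] by (rule antisym)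

lemma LP_card_std:
  assumes "finite A" "card A = N"
  shows "card (LP m A L r) = card (LP m {1..N} L r)"
  using LP_card_eq[of A "{1..N}"] assms by simp

lemma X_notin_LP:
  assumes "(B, bs) \<in> LP m (A - X) L r" "X \<noteq> {}"
  shows "X \<notin> B \<union> set bs"
  using LP_blocks[OF assms(1)] assms(2) by blast

lemma card_lab1:
  assumes X: "X \<subseteq> A" "X \<noteq> {}" "card X \<le> m" and r: "r \<ge> 1"
  shows "card {p \<in> LP m A L r. X \<in> fst p} = card (LP m (A - X) L (r - 1))"
proof -
  have fwd: "(B - {X}, bs) \<in> LP m (A - X) L (r - 1)" if p: "(B, bs) \<in> LP m A L r" "X \<in> B" for B bs
  proof (rule LP_I)
    note P = LP_D[OF p(1)]
    have "partition_on (A - X) ((B \<union> set bs) - {X})" using part_remove[OF _ P(1)] p(2) by blast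
    moreover have "(B \<union> set bs) - {X} = (B - {X}) \<union> set bs" using P(6) p(2) by blast
    ultimately show "partition_on (A - X) ((B - {X}) \<union> set bs)" by metis
    show "card (B - {X}) = r - 1" using P(2,3) p(2) by simp
    show "finite (B - {X})" using P(3) by simp
    show "length bs = L" "distinct bs" using P by simp_all
    show "(B - {X}) \<inter> set bs = {}" using P(6) by blast
    show "\<forall>Y \<in> (B - {X}) \<union> set bs. card Y \<le> m" using P(7) by blast
  qed
  have bwd: "(insert X B, bs) \<in> LP m A L r" "X \<notin> B" if p: "(B, bs) \<in> LP m (A - X) L (r - 1)" for B bs
  proof -
    note P = LP_D[OF p]
    have nX: "X \<notin> B \<union> set bs" using X_notin_LP[OF p X(2)] .
    show "X \<notin> B" using nX by simp
    show "(insert X B, bs) \<in> LP m A L r"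
    proof (rule LP_I)
      have "partition_on A (insert X (B \<union> set bs))" using part_insert_iff[OF nX] P(1) X by simp
      moreover have "insert X (B \<union> set bs) = insert X B \<union> set bs" by blast
      ultimately show "partition_on A (insert X B \<union> set bs)" by metis
      show "card (insert X B) = r" using P(2,3) nX r by simp
      show "finite (insert X B)" using P(3) by simp
      show "length bs = L" "distinct bs" using P by simp_all
      show "insert X B \<inter> set bs = {}" using P(6) nX by blast
      show "\<forall>Y \<in> insert X B \<union> set bs. card Y \<le> m" using P(7) X(3) by blast
    qed
  qed
  have l: "\<forall>p \<in> {p \<in> LP m A L r. X \<in> fst p}. (\<lambda>(B, bs). (insert X B, bs)) ((\<lambda>(B, bs). (B - {X}, bs)) p) = p"
  proof
    fix p assume "p \<in> {p \<in> LP m A L r. X \<in> fst p}"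
    then show "(\<lambda>(B, bs). (insert X B, bs)) ((\<lambda>(B, bs). (B - {X}, bs)) p) = p"
      by (cases p) (simp add: insert_absorb)
  qed
  have rr: "\<forall>p \<in> LP m (A - X) L (r - 1). (\<lambda>(B, bs). (B - {X}, bs)) ((\<lambda>(B, bs). (insert X B, bs)) p) = p"
  proof
    fix p assume "p \<in> LP m (A - X) L (r - 1)"
    then show "(\<lambda>(B, bs). (B - {X}, bs)) ((\<lambda>(B, bs). (insert X B, bs)) p) = p"
      using bwd(2) by (cases p) simp
  qed
  have i1: "(\<lambda>(B, bs). (B - {X}, bs)) ` {p \<in> LP m A L r. X \<in> fst p} \<subseteq> LP m (A - X) L (r - 1)"
  proof (rule image_subsetI)
    fix p assume "p \<in> {p \<in> LP m A L r. X \<in> fst p}"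
    then show "(\<lambda>(B, bs). (B - {X}, bs)) p \<in> LP m (A - X) L (r - 1)" using fwd by (cases p) simp
  qed
  have i2: "(\<lambda>(B, bs). (insert X B, bs)) ` LP m (A - X) L (r - 1) \<subseteq> {p \<in> LP m A L r. X \<in> fst p}"
  proof (rule image_subsetI)
    fix p assume "p \<in> LP m (A - X) L (r - 1)"
    then show "(\<lambda>(B, bs). (insert X B, bs)) p \<in> {p \<in> LP m A L r. X \<in> fst p}" using bwd(1) by (cases p) simp
  qed
  have "bij_betw (\<lambda>(B, bs). (B - {X}, bs)) {p \<in> LP m A L r. X \<in> fst p} (LP m (A - X) L (r - 1))"
    by (rule bij_betw_byWitness[OF l rr i1 i2])
  then show ?thesis by (rule bij_betw_same_card)
qed

lemma card_lab2:
  assumes X: "X \<subseteq> A" "X \<noteq> {}" "card X \<le> m"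
  shows "card {p \<in> LP m A L r. X \<in> set (snd p)} = L * card (LP m (A - X) (L - 1) r)"
proof (cases "L = 0")
  case True
  have E: "{p \<in> LP m A L r. X \<in> set (snd p)} = {}"
  proof (rule equals0I)
    fix p assume p: "p \<in> {p \<in> LP m A L r. X \<in> set (snd p)}"
    obtain B bs where pe: "p = (B, bs)" by (cases p)
    have "length bs = 0" using p pe LP_D(4)[of B bs m A L r] True by simp
    then show False using p pe by simp
  qed
  show ?thesis unfolding E using True by simp
next
  case False
  define h where "h = (\<lambda>(i::nat, (B::nat set set, bs::nat set list)). (B, take i bs @ X # drop i bs))"
  let ?D = "{0..<L} \<times> LP m (A - X) (L - 1) r"
  have injc: "i = j \<and> B = C \<and> bs = cs" if a: "(i, B, bs) \<in> ?D" "(j, C, cs) \<in> ?D" and e: "h (i, B, bs) = h (j, C, cs)" for i B bs j C cs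
  proof -
    have nb: "X \<notin> set bs" "X \<notin> set cs" using X_notin_LP[OF _ X(2)] a by auto
    have l: "length bs = L - 1" "length cs = L - 1" "i < L" "j < L" using a LP_D(4) by auto
    have e2: "take i bs @ X # drop i bs = take j cs @ X # drop j cs" "B = C" using e by (auto simp: h_def)
    have "X \<notin> set (take i bs)" "X \<notin> set (drop i bs)" using nb by (auto dest: in_set_takeD in_set_dropD)
    then have "take i bs = take j cs \<and> drop i bs = drop j cs" using append_Cons_eq_iff[of X "take i bs" "drop i bs" "take j cs" "drop j cs"] e2(1) by simp
    moreover have "bs = take i bs @ drop i bs" "cs = take j cs @ drop j cs" by simp_all
    ultimately have "bs = cs" "length (take i bs) = length (take j cs)" by metis+
    then have "i = j" using l by simp
    then show "i = j \<and> B = C \<and> bs = cs" using \<open>bs = cs\<close> e2 by simp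
  qed
  have inj: "inj_on h ?D"
  proof (rule inj_onI)
    fix x y assume xy: "x \<in> ?D" "y \<in> ?D" "h x = h y"
    obtain i B bs where x: "x = (i, B, bs)" by (cases x rule: prod_cases3)
    obtain j C cs where y: "y = (j, C, cs)" by (cases y rule: prod_cases3)
    show "x = y" using injc[of i B bs j C cs] xy x y by simp
  qed
  have img: "h ` ?D = {p \<in> LP m A L r. X \<in> set (snd p)}"
  proof
    have "h (i, B, bs) \<in> {p \<in> LP m A L r. X \<in> set (snd p)}" if a: "(i, B, bs) \<in> ?D" for i B bs
    proof -
      have ai: "(B, bs) \<in> LP m (A - X) (L - 1) r" "i < L" using a by auto
      note P = LP_D[OF ai(1)]
      have nX: "X \<notin> B \<union> set bs" using X_notin_LP[OF ai(1) X(2)] .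
      let ?bs = "take i bs @ X # drop i bs"
      have s: "set ?bs = insert X (set bs)"
      proof -
        have "set (take i bs) \<union> set (drop i bs) = set bs" by (metis append_take_drop_id set_append)
        then show ?thesis by auto
      qed
      have "(B, ?bs) \<in> LP m A L r"
      proof (rule LP_I)
        have part: "partition_on A (insert X (B \<union> set bs))" using part_insert_iff[OF nX] P(1) X by simp
        have eq: "insert X (B \<union> set bs) = B \<union> set ?bs" using s by blast
        show "partition_on A (B \<union> set ?bs)" by (rule subst[where P="partition_on A", OF eq part])
        show "distinct ?bs"
        proof -
          have "distinct (take i bs @ drop i bs)" using P(5) by simp
          then have d: "distinct (take i bs)" "distinct (drop i bs)" "set (take i bs) \<inter> set (drop i bs) = {}"
            by (simp_all only: distinct_append)
          have "X \<notin> set (take i bs)" "X \<notin> set (drop i bs)" using nX by (auto dest: in_set_takeD in_set_dropD)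
          then show ?thesis using d by auto
        qed
        show "length ?bs = L" using P(4) ai(2) False by simp
        show "card B = r" "finite B" using P by simp_all
        show "B \<inter> set ?bs = {}" unfolding s using P(6) nX by auto
        show "\<forall>Y \<in> B \<union> set ?bs. card Y \<le> m" unfolding s using P(7) X(3) by auto
      qed
      then show "h (i, B, bs) \<in> {p \<in> LP m A L r. X \<in> set (snd p)}"
        using s by (simp add: h_def)
    qed
    note c1 = this
    show "h ` ?D \<subseteq> {p \<in> LP m A L r. X \<in> set (snd p)}"
    proof (rule image_subsetI)
      fix x assume "x \<in> ?D"
      moreover obtain i B bs where x: "x = (i, B, bs)" by (cases x rule: prod_cases3)
      ultimately show "h x \<in> {p \<in> LP m A L r. X \<in> set (snd p)}" using c1 by simp
    qed
    have "(B, bs') \<in> h ` ?D" if p: "(B, bs') \<in> LP m A L r" "X \<in> set (snd (B, bs'))" for B bs'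
    proof -
      note P = LP_D[OF p(1)]
      have Xb: "X \<in> set bs'" using p(2) by simp
      obtain xs ys where xy: "bs' = xs @ X # ys" using split_list[OF Xb] by blast
      have d: "distinct (xs @ ys)" "X \<notin> set xs" "X \<notin> set ys" using P(5) xy by auto
      have nX: "X \<notin> B \<union> set (xs @ ys)" using d P(6) Xb by auto
      have "(B, xs @ ys) \<in> LP m (A - X) (L - 1) r"
      proof (rule LP_I)
        have eq: "B \<union> set bs' = insert X (B \<union> set (xs @ ys))" using xy by auto
        have "partition_on A (insert X (B \<union> set (xs @ ys)))" by (rule subst[where P="partition_on A", OF eq P(1)])
        then show "partition_on (A - X) (B \<union> set (xs @ ys))" using part_insert_iff[OF nX] by blast
        show "\<forall>Y \<in> B \<union> set (xs @ ys). card Y \<le> m" using P(7) xy by auto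
        show "B \<inter> set (xs @ ys) = {}" using P(6) xy by auto
        show "length (xs @ ys) = L - 1" using P(4) xy by auto
        show "card B = r" "finite B" "distinct (xs @ ys)" using P d by simp_all
      qed
      moreover have "length xs < L" using P(4) xy by auto
      ultimately have mem: "(length xs, B, xs @ ys) \<in> ?D" by simp
      have "h (length xs, B, xs @ ys) = (B, bs')" using xy by (simp add: h_def)
      then show "(B, bs') \<in> h ` ?D" using mem by (metis image_eqI)
    qed
    note c2 = this
    show "{p \<in> LP m A L r. X \<in> set (snd p)} \<subseteq> h ` ?D"
    proof (rule subsetI)
      fix x assume "x \<in> {p \<in> LP m A L r. X \<in> set (snd p)}"
      moreover obtain B bs where x: "x = (B, bs)" by (cases x)
      ultimately show "x \<in> h ` ?D" using c2 by simp
    qed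
  qed
  have "card {p \<in> LP m A L r. X \<in> set (snd p)} = card ?D"
    using card_image[OF inj] img by simp
  also have "\<dots> = L * card (LP m (A - X) (L - 1) r)" by (simp add: card_cartesian_product)
  finally show ?thesis .
qed

definition addto :: "nat \<Rightarrow> nat set \<Rightarrow> nat set \<Rightarrow> nat set" where
  "addto a X Y = (if Y = X then insert a Y else Y)"

definition Fm :: "nat \<Rightarrow> (nat set set \<times> nat set list) \<times> nat set \<Rightarrow> nat set set \<times> nat set list" where
  "Fm a = (\<lambda>((B, bs), X). (addto a X ` B, map (addto a X) bs))"

lemma Fm_simp: "Fm a ((B, bs), X) = (addto a X ` B, map (addto a X) bs)"
  by (simp add: Fm_def)

lemma image_id_on: "(\<And>x. x \<in> A \<Longrightarrow> f x = x) \<Longrightarrow> f ` A = A"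
proof -
  assume h: "\<And>x. x \<in> A \<Longrightarrow> f x = x"
  have "f ` A = (\<lambda>x. x) ` A" by (rule image_cong[OF refl h])
  then show ?thesis by simp
qed

lemma map_id_on: "(\<And>x. x \<in> set xs \<Longrightarrow> f x = x) \<Longrightarrow> map f xs = xs"
  by (rule map_idI)

lemma partC:
  assumes a: "a \<notin> A0" and fin: "finite A0"
  shows "card {p \<in> LP m (insert a A0) L r. {a} \<notin> fst p \<union> set (snd p)}
       = card (SIGMA p : LP m A0 L r. {X \<in> fst p \<union> set (snd p). card X < m})"
proof -
  let ?Q = "SIGMA p : LP m A0 L r. {X \<in> fst p \<union> set (snd p). card X < m}"
  let ?PC = "{p \<in> LP m (insert a A0) L r. {a} \<notin> fst p \<union> set (snd p)}"
  define g where "g = (\<lambda>Y::nat set. Y - {a})"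
  have ga: "g (addto a X Y) = Y" if "a \<notin> Y" "a \<notin> X" for X Y
    using that by (auto simp: addto_def g_def)
  have nota: "a \<notin> Y" if "(B, bs) \<in> LP m A0 L r" "Y \<in> B \<union> set bs" for B bs Y
    using LP_blocks[OF that] a by auto
  have gf_id: "g (addto a X Y) = Y" if "(B, bs) \<in> LP m A0 L r" "X \<in> B \<union> set bs" "Y \<in> B \<union> set bs" for B bs X Y
    using ga nota that by blast
  have injc: "(B = C \<and> bs = cs) \<and> X = X'" if q1: "((B, bs), X) \<in> ?Q" and q2: "((C, cs), X') \<in> ?Q" and e: "Fm a ((B, bs), X) = Fm a ((C, cs), X')" for B bs X C cs X'
  proof -
    have e1: "addto a X ` B = addto a X' ` C" "map (addto a X) bs = map (addto a X') cs"
      using e by (simp_all add: Fm_simp)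
    have p1: "(B, bs) \<in> LP m A0 L r" "X \<in> B \<union> set bs" and p2: "(C, cs) \<in> LP m A0 L r" "X' \<in> C \<union> set cs"
      using q1 q2 by auto
    have aX: "a \<notin> X" "a \<notin> X'" using nota p1 p2 by auto
    have gB: "g ` addto a X ` B = B"
      unfolding image_image by (rule image_id_on) (use gf_id[OF p1] in blast)
    have gC: "g ` addto a X' ` C = C"
      unfolding image_image by (rule image_id_on) (use gf_id[OF p2] in blast)
    have BC: "B = C"
    proof -
      have "B = g ` addto a X ` B" by (rule sym[OF gB])
      also have "\<dots> = g ` addto a X' ` C" by (simp only: e1(1))
      also have "\<dots> = C" by (rule gC)
      finally show ?thesis .
    qed
    have gbs: "map g (map (addto a X) bs) = bs"
      unfolding map_map by (rule map_id_on) (use gf_id[OF p1] in auto)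
    have gcs: "map g (map (addto a X') cs) = cs"
      unfolding map_map by (rule map_id_on) (use gf_id[OF p2] in auto)
    have bc: "bs = cs"
    proof -
      have "bs = map g (map (addto a X) bs)" by (rule sym[OF gbs])
      also have "\<dots> = map g (map (addto a X') cs)" by (simp only: e1(2))
      also have "\<dots> = cs" by (rule gcs)
      finally show ?thesis .
    qed
    have u: "addto a X ` (B \<union> set bs) = addto a X ` B \<union> set (map (addto a X) bs)" by (simp add: image_Un)
    have u': "addto a X' ` (C \<union> set cs) = addto a X' ` C \<union> set (map (addto a X') cs)" by (simp add: image_Un)
    have "insert a X \<in> addto a X ` (B \<union> set bs)" using p1(2) by (auto simp: addto_def)
    also have "addto a X ` (B \<union> set bs) = addto a X' ` (C \<union> set cs)"
      unfolding u u' e1 ..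
    finally obtain Y where Y: "Y \<in> C \<union> set cs" "insert a X = addto a X' Y" by auto
    have YB: "Y \<in> B \<union> set bs" using Y(1) BC bc by simp
    have "X = X'"
    proof (cases "Y = X'")
      case True then show ?thesis using Y aX by (auto simp: addto_def insert_ident)
    next
      case False then have "insert a X = Y" using Y by (simp add: addto_def)
      then show ?thesis using nota[OF p1(1) YB] by auto
    qed
    then show "(B = C \<and> bs = cs) \<and> X = X'" using BC bc by simp
  qed
  have inj: "inj_on (Fm a) ?Q"
  proof (rule inj_onI)
    fix x y assume xy: "x \<in> ?Q" "y \<in> ?Q" "Fm a x = Fm a y"
    obtain B bs X where x: "x = ((B, bs), X)" by (metis prod.exhaust)
    obtain C cs X' where y: "y = ((C, cs), X')" by (metis prod.exhaust)
    show "x = y" using injc[of B bs X C cs X'] xy x y by simp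
  qed
  have img1c: "Fm a ((B, bs), X) \<in> ?PC" if q: "((B, bs), X) \<in> ?Q" for B bs X
  proof -
    have p: "(B, bs) \<in> LP m A0 L r" "X \<in> B \<union> set bs" "card X < m" using q by auto
    note P = LP_D[OF p(1)]
    let ?f = "addto a X"
    have aX: "a \<notin> X" using nota p by auto
    have injf: "inj_on ?f (B \<union> set bs)"
      by (rule inj_on_inverseI[where g = g]) (use gf_id[OF p(1,2)] in blast)
    have fQ: "?f ` (B \<union> set bs) = insert (insert a X) ((B \<union> set bs) - {X})"
      using p(2) by (auto simp: addto_def)
    have nin: "insert a X \<notin> (B \<union> set bs) - {X}" using nota[OF p(1)] by auto
    have XA: "X \<subseteq> A0" using LP_blocks[OF p(1,2)] by auto
    have "partition_on (A0 - X) ((B \<union> set bs) - {X})" by (rule part_remove[OF p(2) P(1)])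
    moreover have "insert a A0 - insert a X = A0 - X" using a by auto
    ultimately have "partition_on (insert a A0 - insert a X) ((B \<union> set bs) - {X})" by simp
    then have pA: "partition_on (insert a A0) (insert (insert a X) ((B \<union> set bs) - {X}))"
      using part_insert_iff[OF nin] XA by blast
    have eqA: "insert (insert a X) ((B \<union> set bs) - {X}) = ?f ` B \<union> set (map ?f bs)"
      using fQ by (simp add: image_Un)
    have 1: "partition_on (insert a A0) (?f ` B \<union> set (map ?f bs))"
      by (rule subst[where P="partition_on (insert a A0)", OF eqA pA])
    have 2: "card (?f ` B) = r" using injf P(2) by (simp add: card_image inj_on_subset)
    have 3: "distinct (map ?f bs)" using injf P(5) by (simp add: distinct_map inj_on_subset)
    have 4: "?f ` B \<inter> set (map ?f bs) = {}"
      using P(6) inj_on_image_Int[OF injf, of B "set bs"] by auto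
    have fX: "finite X" using XA fin finite_subset by blast
    have 5: "\<forall>Y \<in> ?f ` B \<union> set (map ?f bs). card Y \<le> m"
    proof
      fix Y assume "Y \<in> ?f ` B \<union> set (map ?f bs)"
      then obtain Z where Z: "Z \<in> B \<union> set bs" "Y = ?f Z" by auto
      show "card Y \<le> m"
      proof (cases "Z = X")
        case True then show ?thesis using Z p(3) fX aX by (simp add: addto_def)
      next
        case False
        then have "Y = Z" using Z by (simp add: addto_def)
        moreover have "card Z \<le> m" using P(7) Z(1) by blast
        ultimately show ?thesis by simp
      qed
    qed
    have 6: "{a} \<notin> ?f ` B \<union> set (map ?f bs)"
    proof
      assume "{a} \<in> ?f ` B \<union> set (map ?f bs)"
      then obtain Z where Z: "Z \<in> B \<union> set bs" "{a} = ?f Z" by auto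
      have ne: "Z \<noteq> {}" using LP_blocks[OF p(1) Z(1)] by auto
      show False
      proof (cases "Z = X")
        case True then show ?thesis using Z ne aX by (auto simp: addto_def)
      next
        case False then have "{a} = Z" using Z by (simp add: addto_def)
        then show ?thesis using nota[OF p(1) Z(1)] by auto
      qed
    qed
    have "(?f ` B, map ?f bs) \<in> LP m (insert a A0) L r"
      by (rule LP_I[OF 1 2 _ _ 3 4 5]) (use P in simp_all)
    then show "Fm a ((B, bs), X) \<in> ?PC" using 6 by (simp add: Fm_simp)
  qed
  have img1: "Fm a ` ?Q \<subseteq> ?PC"
  proof (rule image_subsetI)
    fix x assume "x \<in> ?Q"
    moreover obtain B bs X where x: "x = ((B, bs), X)" by (metis prod.exhaust)
    ultimately show "Fm a x \<in> ?PC" using img1c by simp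
  qed
  have img2c: "(B, bs) \<in> Fm a ` ?Q" if p: "(B, bs) \<in> LP m (insert a A0) L r" "{a} \<notin> B \<union> set bs" for B bs
  proof -
    note P = LP_D[OF p(1)]
    let ?Q' = "B \<union> set bs"
    obtain Y0 where Y0: "Y0 \<in> ?Q'" "a \<in> Y0" using partition_onD1[OF P(1)] by blast
    define X where "X = Y0 - {a}"
    have gY0: "g Y0 = X" by (simp add: X_def g_def)
    have Y0sub: "Y0 \<subseteq> insert a A0" "Y0 \<noteq> {}" using LP_blocks[OF p(1) Y0(1)] by auto
    have fY0: "finite Y0" using Y0sub(1) fin finite_subset by blast
    have "Y0 \<noteq> {a}" using Y0(1) p(2) by auto
    then have Xne: "X \<noteq> {}" using Y0(2) X_def by auto
    have other: "a \<notin> Y \<and> Y \<inter> Y0 = {}" if "Y \<in> ?Q'" "Y \<noteq> Y0" for Y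
      using partition_onD2[OF P(1)] that Y0 by (auto simp: disjoint_def)
    have oth2: "g Y = Y \<and> Y \<noteq> X" if "Y \<in> ?Q'" "Y \<noteq> Y0" for Y
    proof -
      have "a \<notin> Y" "Y \<inter> Y0 = {}" using other that by auto
      moreover have "Y \<noteq> {}" using LP_blocks[OF p(1) that(1)] by auto
      ultimately show ?thesis by (auto simp: X_def g_def)
    qed
    have XnQ: "X \<notin> ?Q' - {Y0}" using oth2 by blast
    have injg: "inj_on g ?Q'"
    proof (rule inj_onI)
      fix Y1 Y2 assume y: "Y1 \<in> ?Q'" "Y2 \<in> ?Q'" "g Y1 = g Y2"
      show "Y1 = Y2"
      proof (cases "Y1 = Y0")
        case True
        show ?thesis
        proof (rule ccontr)
          assume "Y1 \<noteq> Y2"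
          then have "Y2 \<noteq> Y0" using True by simp
          then have "g Y2 = Y2" "Y2 \<noteq> X" using oth2[OF y(2)] by auto
          then show False using y(3) True gY0 by simp
        qed
      next
        case False
        then have g1: "g Y1 = Y1" "Y1 \<noteq> X" using oth2[OF y(1)] by auto
        show ?thesis
        proof (cases "Y2 = Y0")
          case True then show ?thesis using g1 y(3) gY0 by simp
        next
          case False then show ?thesis using g1 y(3) oth2[OF y(2)] by simp
        qed
      qed
    qed
    have gQ: "g ` ?Q' = insert X (?Q' - {Y0})"
    proof -
      have "?Q' = insert Y0 (?Q' - {Y0})" using Y0(1) by blast
      then have "g ` ?Q' = insert (g Y0) (g ` (?Q' - {Y0}))" by (metis image_insert)
      also have "g ` (?Q' - {Y0}) = ?Q' - {Y0}" by (rule image_id_on) (use oth2 in blast)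
      finally show ?thesis using gY0 by simp
    qed
    have "partition_on (insert a A0 - Y0) (?Q' - {Y0})" by (rule part_remove[OF Y0(1) P(1)])
    moreover have "insert a A0 - Y0 = A0 - X" using a Y0 Y0sub X_def by auto
    ultimately have pp: "partition_on (A0 - X) (?Q' - {Y0})" by simp
    have XA: "X \<subseteq> A0" using Y0sub a X_def by auto
    have pA: "partition_on A0 (insert X (?Q' - {Y0}))" using part_insert_iff[OF XnQ] pp XA Xne by blast
    have eqA: "insert X (?Q' - {Y0}) = g ` B \<union> set (map g bs)" using gQ by (simp add: image_Un)
    have 1: "partition_on A0 (g ` B \<union> set (map g bs))"
      by (rule subst[where P="partition_on A0", OF eqA pA])
    have 2: "card (g ` B) = r" using injg P(2) by (simp add: card_image inj_on_subset)
    have 3: "distinct (map g bs)" using injg P(5) by (simp add: distinct_map inj_on_subset)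
    have 4: "g ` B \<inter> set (map g bs) = {}"
      using P(6) inj_on_image_Int[OF injg, of B "set bs"] by auto
    have 5: "\<forall>Y \<in> g ` B \<union> set (map g bs). card Y \<le> m"
    proof
      fix Y assume "Y \<in> g ` B \<union> set (map g bs)"
      then obtain Z where Z: "Z \<in> ?Q'" "Y = g Z" by auto
      have "finite Z" using LP_blocks[OF p(1) Z(1)] fin finite_subset by blast
      then have "card Y \<le> card Z" using Z by (simp add: card_Diff1_le g_def)
      moreover have "card Z \<le> m" using P(7) Z(1) by blast
      ultimately show "card Y \<le> m" by linarith
    qed
    have pm: "(g ` B, map g bs) \<in> LP m A0 L r"
      by (rule LP_I[OF 1 2 _ _ 3 4 5]) (use P in simp_all)
    have "X \<in> g ` (B \<union> set bs)" by (rule image_eqI[where f=g and x=Y0]) (simp_all only: gY0 Y0(1))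
    then have Xin: "X \<in> g ` B \<union> set (map g bs)" by (simp add: image_Un)
    have "card X < card Y0" unfolding X_def by (rule card_Diff1_less[OF fY0 Y0(2)])
    moreover have "card Y0 \<le> m" using P(7) Y0(1) by blast
    ultimately have cX: "card X < m" by linarith
    have fg: "addto a X (g Y) = Y" if "Y \<in> ?Q'" for Y
    proof (cases "Y = Y0")
      case True then show ?thesis using gY0 Y0(2) X_def by (auto simp: addto_def)
    next
      case False
      then have "g Y = Y" "Y \<noteq> X" using oth2 that by auto
      then show ?thesis by (simp add: addto_def)
    qed
    have e1: "addto a X ` g ` B = B"
      unfolding image_image by (rule image_id_on) (use fg in blast)
    have e2: "map (addto a X) (map g bs) = bs"
      unfolding map_map by (rule map_id_on) (use fg in auto)
    have "(B, bs) = Fm a ((g ` B, map g bs), X)" unfolding Fm_simp e1 e2 ..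
    moreover have "((g ` B, map g bs), X) \<in> ?Q" using pm Xin cX by simp
    ultimately show "(B, bs) \<in> Fm a ` ?Q" by (rule image_eqI)
  qed
  have img2: "?PC \<subseteq> Fm a ` ?Q"
  proof (rule subsetI)
    fix x assume "x \<in> ?PC"
    moreover obtain B bs where x: "x = (B, bs)" by (cases x)
    ultimately show "x \<in> Fm a ` ?Q" using img2c by simp
  qed
  have "?PC = Fm a ` ?Q" using img1 img2 by (rule subset_antisym[rotated])
  then have "card ?PC = card (Fm a ` ?Q)" by simp
  also have "\<dots> = card ?Q" by (rule card_image[OF inj])
  finally show ?thesis .
qed

lemma swap_card:
  assumes fP: "finite P0" and fA: "finite A0" and G: "\<And>p. p \<in> P0 \<Longrightarrow> G p \<subseteq> Pow A0"
  shows "card {(p, X). p \<in> P0 \<and> X \<in> G p \<and> card X = m}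
       = (\<Sum>X\<in>{X. X \<subseteq> A0 \<and> card X = m}. card {p \<in> P0. X \<in> G p})"
proof -
  let ?S = "SIGMA X:{X. X \<subseteq> A0 \<and> card X = m}. {p \<in> P0. X \<in> G p}"
  have eq: "{(p, X). p \<in> P0 \<and> X \<in> G p \<and> card X = m} = (\<lambda>(X, p). (p, X)) ` ?S"
  proof
    show "{(p, X). p \<in> P0 \<and> X \<in> G p \<and> card X = m} \<subseteq> (\<lambda>(X, p). (p, X)) ` ?S"
    proof (rule subsetI)
      fix x assume x: "x \<in> {(p, X). p \<in> P0 \<and> X \<in> G p \<and> card X = m}"
      obtain p X where xe: "x = (p, X)" by (cases x)
      have "p \<in> P0" "X \<in> G p" "card X = m" using x xe by auto
      moreover then have "X \<subseteq> A0" using G by blast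
      ultimately have "(X, p) \<in> ?S" by simp
      moreover have "x = (\<lambda>(X, p). (p, X)) (X, p)" using xe by simp
      ultimately show "x \<in> (\<lambda>(X, p). (p, X)) ` ?S" by (simp only: image_eqI)
    qed
    show "(\<lambda>(X, p). (p, X)) ` ?S \<subseteq> {(p, X). p \<in> P0 \<and> X \<in> G p \<and> card X = m}" by auto
  qed
  have inj: "inj_on (\<lambda>(X, p). (p, X)) ?S" by (rule inj_onI) auto
  have fin: "finite {X. X \<subseteq> A0 \<and> card X = m}" by (rule rev_finite_subset[of "Pow A0"]) (use fA in auto)
  have "card {(p, X). p \<in> P0 \<and> X \<in> G p \<and> card X = m} = card ?S"
    unfolding eq by (rule card_image[OF inj])
  also have "\<dots> = (\<Sum>X\<in>{X. X \<subseteq> A0 \<and> card X = m}. card {p \<in> P0. X \<in> G p})"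
    using fin fP by (intro card_SigmaI) auto
  finally show ?thesis .
qed

lemma card_blocks:
  assumes "(B, bs) \<in> LP m A L r"
  shows "card (B \<union> set bs) = L + r"
proof -
  note P = LP_D[OF assms]
  have "card (B \<union> set bs) = card B + card (set bs)" using P(3,6) by (simp add: card_Un_disjoint)
  also have "card (set bs) = L" using P(4,5) by (simp add: distinct_card)
  finally show ?thesis using P(2) by simp
qed

lemma recur_nat:
  fixes n m r L :: nat
  assumes n: "n \<ge> 1" and m: "m \<ge> 1" and r: "r \<ge> 1"
  defines "A0 \<equiv> {1..n-1}"
  defines "S0 \<equiv> card (LP m A0 L r)"
  shows "card (LP m {1..n} L r) + ((n - 1) choose m) * card (LP m {1..n-m-1} L (r - 1))
          + ((n - 1) choose m) * (L * card (LP m {1..n-m-1} (L - 1) r))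
       = card (LP m A0 L (r - 1)) + L * card (LP m A0 (L - 1) r) + (L + r) * S0"
proof -
  have A: "{1..n} = insert n A0" using n by (auto simp: A0_def)
  have nA0: "n \<notin> A0" and fA0: "finite A0" and cA0: "card A0 = n - 1" by (auto simp: A0_def)
  have AmA0: "{1..n} - {n} = A0" using A nA0 by auto
  let ?P = "LP m {1..n} L r"
  let ?PA = "{p \<in> ?P. {n} \<in> fst p}"
  let ?PB = "{p \<in> ?P. {n} \<in> set (snd p)}"
  let ?PC = "{p \<in> ?P. {n} \<notin> fst p \<union> set (snd p)}"
  have finP: "finite ?P" by (rule finite_LP) simp
  have disjAB: "?PA \<inter> ?PB = {}"
  proof (rule equals0I)
    fix p assume "p \<in> ?PA \<inter> ?PB"
    moreover obtain B bs where "p = (B, bs)" by (cases p)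
    ultimately show False using LP_D(6)[of B bs m "{1..n}" L r] by auto
  qed
  have eqP: "?P = (?PA \<union> ?PB) \<union> ?PC" by blast
  have "card ?P = card ((?PA \<union> ?PB) \<union> ?PC)" by (rule arg_cong[where f=card, OF eqP])
  also have "\<dots> = card (?PA \<union> ?PB) + card ?PC"
    by (rule card_Un_disjoint) (use finP in auto)
  also have "card (?PA \<union> ?PB) = card ?PA + card ?PB"
    using finP disjAB by (intro card_Un_disjoint) auto
  finally have c1: "card ?P = card ?PA + card ?PB + card ?PC" .
  have cA: "card ?PA = card (LP m A0 L (r - 1))"
    using card_lab1[of "{n}" "{1..n}" m r L] n m r AmA0 by simp
  have cB: "card ?PB = L * card (LP m A0 (L - 1) r)"
    using card_lab2[of "{n}" "{1..n}" m L r] n m AmA0 by simp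
  let ?PP = "LP m A0 L r"
  let ?Q = "SIGMA p : ?PP. {X \<in> fst p \<union> set (snd p). card X < m}"
  have cC: "card ?PC = card ?Q" using partC[OF nA0 fA0, of m L r] A by simp
  have finP0: "finite ?PP" by (rule finite_LP[OF fA0])
  have blk1: "fst p \<subseteq> Pow A0" "set (snd p) \<subseteq> Pow A0" if "p \<in> ?PP" for p
  proof -
    obtain B bs where pe: "p = (B, bs)" by (cases p)
    show "fst p \<subseteq> Pow A0" "set (snd p) \<subseteq> Pow A0" using LP_blocks[of B bs m A0 L r] that pe by auto
  qed
  let ?All = "SIGMA p : ?PP. fst p \<union> set (snd p)"
  let ?E1 = "{(p, X). p \<in> ?PP \<and> X \<in> fst p \<and> card X = m}"
  let ?E2 = "{(p, X). p \<in> ?PP \<and> X \<in> set (snd p) \<and> card X = m}"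
  have finBlk: "finite (fst p \<union> set (snd p))" if "p \<in> ?PP" for p
  proof -
    obtain B bs where pe: "p = (B, bs)" by (cases p)
    show ?thesis using LP_D(3)[of B bs m A0 L r] that pe by simp
  qed
  have finAll: "finite ?All"
    using finP0 finBlk by (intro finite_SigmaI) auto
  have cAll: "card ?All = (L + r) * S0"
  proof -
    have "card ?All = (\<Sum>p\<in>?PP. card (fst p \<union> set (snd p)))"
      using finP0 finBlk by (intro card_SigmaI) auto
    also have "\<dots> = (\<Sum>p\<in>?PP. L + r)"
    proof (rule sum.cong[OF refl])
      fix p assume "p \<in> ?PP"
      moreover obtain B bs where "p = (B, bs)" by (cases p)
      ultimately show "card (fst p \<union> set (snd p)) = L + r" using card_blocks by simp
    qed
    finally show ?thesis by (simp add: S0_def)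
  qed
  have le_m: "card X \<le> m" if "(p, X) \<in> ?All" for p X
  proof -
    obtain B bs where "p = (B, bs)" by (cases p)
    then show ?thesis using that LP_D(7)[of B bs m A0 L r] by auto
  qed
  have All_eq: "?All = ?Q \<union> (?E1 \<union> ?E2)"
  proof
    show "?All \<subseteq> ?Q \<union> (?E1 \<union> ?E2)"
    proof (rule subsetI)
      fix x assume x: "x \<in> ?All"
      obtain p X where xe: "x = (p, X)" by (cases x)
      have "card X \<le> m" using le_m x xe by simp
      then show "x \<in> ?Q \<union> (?E1 \<union> ?E2)" using x xe by auto
    qed
    show "?Q \<union> (?E1 \<union> ?E2) \<subseteq> ?All" by auto
  qed
  have "?E1 \<union> ?E2 \<subseteq> ?All" unfolding All_eq by (rule Un_upper2)
  then have finE: "finite (?E1 \<union> ?E2)" by (rule finite_subset[OF _ finAll])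
  have "?Q \<subseteq> ?All" unfolding All_eq by (rule Un_upper1)
  then have finQ: "finite ?Q" by (rule finite_subset[OF _ finAll])
  have dQE: "?Q \<inter> (?E1 \<union> ?E2) = {}" by auto
  have dE: "?E1 \<inter> ?E2 = {}"
  proof (rule equals0I)
    fix x assume x: "x \<in> ?E1 \<inter> ?E2"
    obtain p X where xe: "x = (p, X)" by (cases x)
    obtain B bs where pe: "p = (B, bs)" by (cases p)
    show False using x xe pe LP_D(6)[of B bs m A0 L r] by auto
  qed
  have cAll2: "card ?All = card ?Q + card ?E1 + card ?E2"
  proof -
    have "card ?All = card ?Q + card (?E1 \<union> ?E2)"
      unfolding All_eq by (rule card_Un_disjoint[OF finQ finE dQE])
    also have "card (?E1 \<union> ?E2) = card ?E1 + card ?E2"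
      using finE dE by (intro card_Un_disjoint) auto
    finally show ?thesis by simp
  qed
  let ?Xs = "{X. X \<subseteq> A0 \<and> card X = m}"
  have cXs: "card ?Xs = (n - 1) choose m" using n_subsets[OF fA0, of m] cA0 by simp
  have cAX: "card (A0 - X) = n - m - 1" if "X \<in> ?Xs" for X
  proof -
    have "finite X" "X \<subseteq> A0" "card X = m" using that fA0 finite_subset by auto
    then have "card (A0 - X) = card A0 - card X" by (simp add: card_Diff_subset)
    then show ?thesis using cA0 \<open>card X = m\<close> by simp
  qed
  have finAX: "finite (A0 - X)" for X using fA0 by simp
  have neX: "X \<noteq> {}" if "X \<in> ?Xs" for X using that m by auto
  have cE1: "card ?E1 = ((n - 1) choose m) * card (LP m {1..n-m-1} L (r - 1))"
  proof -
    have "card ?E1 = (\<Sum>X\<in>?Xs. card {p \<in> ?PP. X \<in> fst p})"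
      by (rule swap_card[OF finP0 fA0 blk1(1)])
    also have "\<dots> = (\<Sum>X\<in>?Xs. card (LP m {1..n-m-1} L (r - 1)))"
    proof (rule sum.cong[OF refl])
      fix X assume X: "X \<in> ?Xs"
      have "card {p \<in> ?PP. X \<in> fst p} = card (LP m (A0 - X) L (r - 1))"
        using card_lab1[of X A0 m r L] X neX[OF X] r by simp
      also have "\<dots> = card (LP m {1..n-m-1} L (r - 1))"
        by (rule LP_card_std[OF finAX cAX[OF X]])
      finally show "card {p \<in> ?PP. X \<in> fst p} = card (LP m {1..n-m-1} L (r - 1))" .
    qed
    finally show ?thesis using cXs by simp
  qed
  have cE2: "card ?E2 = ((n - 1) choose m) * (L * card (LP m {1..n-m-1} (L - 1) r))"
  proof -
    have "card ?E2 = (\<Sum>X\<in>?Xs. card {p \<in> ?PP. X \<in> set (snd p)})"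
      by (rule swap_card[OF finP0 fA0 blk1(2)])
    also have "\<dots> = (\<Sum>X\<in>?Xs. L * card (LP m {1..n-m-1} (L - 1) r))"
    proof (rule sum.cong[OF refl])
      fix X assume X: "X \<in> ?Xs"
      have "card {p \<in> ?PP. X \<in> set (snd p)} = L * card (LP m (A0 - X) (L - 1) r)"
        using card_lab2[of X A0 m L r] X neX[OF X] by simp
      also have "\<dots> = L * card (LP m {1..n-m-1} (L - 1) r)"
        using LP_card_std[OF finAX cAX[OF X]] by simp
      finally show "card {p \<in> ?PP. X \<in> set (snd p)} = L * card (LP m {1..n-m-1} (L - 1) r)" .
    qed
    finally show ?thesis using cXs by simp
  qed
  have e1: "card ?P = card (LP m A0 L (r - 1)) + L * card (LP m A0 (L - 1) r) + card ?Q"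
    by (simp only: c1 cA cB cC)
  have e2: "(L + r) * S0 = card ?Q + card ?E1 + card ?E2"
  proof -
    have "(L + r) * S0 = card ?All" by (rule cAll[symmetric])
    also have "\<dots> = card ?Q + card ?E1 + card ?E2" by (rule cAll2)
    finally show ?thesis .
  qed
  show ?thesis unfolding cE1[symmetric] cE2[symmetric] e1 e2 by (simp only: add.assoc)
qed

theorem mainTheorem4:
  fixes n m k r :: nat
  assumes "n \<ge> 1" and "m \<ge> 1" and "k \<ge> 1" and "r \<ge> 1"
  shows "int (S_le m n k r) =
           int (S_le m (n - 1) k (r - 1))
         + int (k - 1) * int (S_le m (n - 1) (k - 1) r)
         + int (k + r - 1) * int (S_le m (n - 1) k r)
         - int ((n - 1) choose m) * int (S_le m (n - m - 1) k (r - 1))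
         - int (k - 1) * int ((n - 1) choose m) * int (S_le m (n - m - 1) (k - 1) r)"
proof -
  have k1: "k + r - 1 = (k - 1) + r" using assms(3) by simp
  have R: "card (LP m {1..n} (k - 1) r) + ((n - 1) choose m) * card (LP m {1..n-m-1} (k - 1) (r - 1))
          + ((n - 1) choose m) * ((k - 1) * card (LP m {1..n-m-1} (k - 1 - 1) r))
       = card (LP m {1..n-1} (k - 1) (r - 1)) + (k - 1) * card (LP m {1..n-1} (k - 1 - 1) r)
          + (k - 1 + r) * card (LP m {1..n-1} (k - 1) r)"
    by (rule recur_nat[OF assms(1,2,4)])
  have R': "int (S_le m n k r) + int ((n - 1) choose m) * int (S_le m (n - m - 1) k (r - 1))
          + int ((n - 1) choose m) * (int (k - 1) * int (S_le m (n - m - 1) (k - 1) r))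
       = int (S_le m (n - 1) k (r - 1)) + int (k - 1) * int (S_le m (n - 1) (k - 1) r)
          + int (k + r - 1) * int (S_le m (n - 1) k r)"
    unfolding S_le_LP k1 using arg_cong[OF R, of int] by (simp only: of_nat_add of_nat_mult)
  show ?thesis using R' by algebra
qed

end
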